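(* Consider the system $x(t+1)=x(t)-L(t)x(t)$ with $\mathbf{1}^*\mathbb{E}(L(t))=0$. Let $a^{\mathrm{ind}}_{\max}>0$ and $\alpha>0$ be constants such that almost surely $a_{ij}(t)\le a^{\mathrm{ind}}_{\max}$ for all $i\ne j$ and $a_{ii}(t)\ge\alpha$ for all $i$. Suppose that for any two distinct pairs $(i,j)\ne(k,l)$ with $i\ne j$, $k\ne l$, the random variables $a_{ij}(t)$ and $a_{kl}(t)$ are uncorrelated. Then $$\mathbb{E}[L(t)^*\mathbf{1}\mathbf{1}^*L(t)]\le\gamma\,\mathbb{E}[L(t)+L(t)^*-L(t)^*L(t)]\quad\text{with }\gamma=\frac{a^{\mathrm{ind}}_{\max}}{\alpha},$$ and consequently $\mathbb{E}[(\bar x(t)-\bar x(0))^2]\le\frac{\gamma}{N+\gamma}V(x(0))$ for all $t\ge0$.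
   Context: Let $I$ be a finite set of $N$ nodes. For each $t\in\mathbb{Z}_{\ge0}$ let $A(t)=(a_{ij}(t))_{i,j\in I}$ be a random matrix with $a_{ij}(t)\ge 0$ and $\sum_{\ell\in I}a_{i\ell}(t)=1$ for all $i$; the matrices $A(t)$ are i.i.d. in $t$. $L(t)$ is the Laplacian: $L_{ij}(t)=-a_{ij}(t)$ for $i\ne j$, $L_{ii}(t)=\sum_{j\ne i}a_{ij}(t)$. $x(0)\in\mathbb{R}^I$ is deterministic. $\mathbf{1}$ is the all-ones vector, $M^*$ the transpose; for $y\in\mathbb{R}^I$, $\bar y=\frac1N\sum_i y_i$, $V(y)=\frac1N\sum_i(y_i-\bar y)^2$. For square matrices, $A\le B$ means $A-B$ is negative semidefinite. *)

theory Defs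
  imports "HOL-Probability.Probability"
begin

text \<open>Nodes are the elements of a finite type 'n, so N = CARD('n).
  Matrices indexed by I x I are elements of real^'n^'n.\<close>

definition laplacian :: "real^'n^'n \<Rightarrow> real^'n^'n" where
  "laplacian A = (\<chi> i j. if i = j then (\<Sum>k\<in>UNIV - {i}. A $ i $ k) else - A $ i $ j)"

definition ones_vec :: "real^'n" where
  "ones_vec = (\<chi> i. 1)"

definition ones_mat :: "real^'n^'n" where
  "ones_mat = (\<chi> i j. 1)"

definition mat_expectation :: "'a measure \<Rightarrow> ('a \<Rightarrow> real^'n^'m) \<Rightarrow> real^'n^'m" where
  "mat_expectation M F = (\<chi> i j. integral\<^sup>L M (\<lambda>\<omega>. F \<omega> $ i $ j))"

definition mat_le :: "real^'n^'n \<Rightarrow> real^'n^'n \<Rightarrow> bool" where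
  "mat_le A B \<longleftrightarrow> (\<forall>v. v \<bullet> ((A - B) *v v) \<le> 0)"

definition avg :: "real^'n \<Rightarrow> real" where
  "avg y = (\<Sum>i\<in>UNIV. y $ i) / real CARD('n)"

definition Var :: "real^'n \<Rightarrow> real" where
  "Var y = (\<Sum>i\<in>UNIV. (y $ i - avg y)^2) / real CARD('n)"

primrec traj :: "(nat \<Rightarrow> 'a \<Rightarrow> real^'n^'n) \<Rightarrow> real^'n \<Rightarrow> nat \<Rightarrow> 'a \<Rightarrow> real^'n" where
  "traj A x0 0 \<omega> = x0"
| "traj A x0 (Suc t) \<omega> = traj A x0 t \<omega> - laplacian (A t \<omega>) *v traj A x0 t \<omega>"

end

theory Submission
  imports Defs
begin


lemma continuous_on_if_const[continuous_intros]:
  "continuous_on S f \<Longrightarrow> continuous_on S g \<Longrightarrow> continuous_on S (\<lambda>x. if P then f x else g x)"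
  by (cases P) auto

lemma continuous_on_mv[continuous_intros]:
  fixes f :: "'a::topological_space \<Rightarrow> real^'n^'m"
  shows "continuous_on S f \<Longrightarrow> continuous_on S g \<Longrightarrow> continuous_on S (\<lambda>x. f x *v g x)"
  unfolding matrix_vector_mult_def by (intro continuous_intros)

lemma continuous_on_mm[continuous_intros]:
  fixes f :: "'a::topological_space \<Rightarrow> real^'n^'m"
  shows "continuous_on S f \<Longrightarrow> continuous_on S g \<Longrightarrow> continuous_on S (\<lambda>x. f x ** g x)"
  unfolding matrix_matrix_mult_def by (intro continuous_intros)

lemma continuous_on_transpose[continuous_intros]:
  fixes f :: "'a::topological_space \<Rightarrow> real^'n^'m"
  shows "continuous_on S f \<Longrightarrow> continuous_on S (\<lambda>x. transpose (f x))"
  unfolding transpose_def by (intro continuous_intros)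

lemma continuous_on_laplacian[continuous_intros]:
  fixes f :: "'a::topological_space \<Rightarrow> real^'n^'n"
  shows "continuous_on S f \<Longrightarrow> continuous_on S (\<lambda>x. laplacian (f x))"
  unfolding laplacian_def by (intro continuous_intros)

lemma norm_mat_le: "norm (B::real^'n^'n) \<le> (\<Sum>i\<in>UNIV. \<Sum>j\<in>UNIV. \<bar>B$i$j\<bar>)"
proof -
  have "norm B \<le> (\<Sum>i\<in>UNIV. norm (B$i))" unfolding norm_vec_def by (rule L2_set_le_sum) auto
  also have "\<dots> \<le> (\<Sum>i\<in>UNIV. \<Sum>j\<in>UNIV. \<bar>B$i$j\<bar>)" by (intro sum_mono norm_le_l1_cart)
  finally show ?thesis .
qed

lemma cont_bound:
  fixes \<phi> :: "'b::euclidean_space \<Rightarrow> 'c::real_normed_vector"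
  assumes "continuous_on UNIV \<phi>"
  shows "\<exists>C. \<forall>x. norm x \<le> r \<longrightarrow> norm (\<phi> x) \<le> C"
proof -
  have "compact (\<phi> ` cball 0 r)"
    by (intro compact_continuous_image continuous_on_subset[OF assms] compact_cball) auto
  then obtain C where "\<forall>y\<in>\<phi> ` cball 0 r. norm y \<le> C"
    using compact_imp_bounded bounded_iff by metis
  then have "\<forall>x. norm x \<le> r \<longrightarrow> norm (\<phi> x) \<le> C" by (simp add: mem_cball_0)
  then show ?thesis by blast
qed

lemma lap_mv: "(laplacian B *v v) $ i = (\<Sum>j\<in>UNIV. (if j = i then 0 else B$i$j) * (v$i - v$j))"
proof -
  have "(laplacian B *v v) $ i = (\<Sum>j\<in>UNIV. laplacian B $ i $ j * v $ j)"
    by (simp add: matrix_vector_mult_def)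
  also have "\<dots> = laplacian B $ i $ i * v $ i + (\<Sum>j\<in>UNIV-{i}. laplacian B $ i $ j * v $ j)"
    by (simp add: sum.remove)
  also have "\<dots> = (\<Sum>j\<in>UNIV-{i}. B$i$j) * v $ i + (\<Sum>j\<in>UNIV-{i}. - B $ i $ j * v $ j)"
    by (simp add: laplacian_def)
  also have "\<dots> = (\<Sum>j\<in>UNIV-{i}. B$i$j * (v$i - v$j))"
    by (simp add: sum_distrib_right sum_distrib_left sum.distrib[symmetric] algebra_simps sum_negf)
  also have "\<dots> = (\<Sum>j\<in>UNIV. (if j = i then 0 else B$i$j) * (v$i - v$j))"
    by (subst sum.remove[of UNIV i]) (auto intro!: sum.cong)
  finally show ?thesis .
qed

lemma dsum_ident:
  fixes w u :: "'i \<Rightarrow> real" assumes "finite I"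
  shows "(\<Sum>j\<in>I. \<Sum>k\<in>I. w j * w k * (u j - u k)^2)
     = 2 * ((\<Sum>j\<in>I. w j * (u j)^2) * (\<Sum>k\<in>I. w k)) - 2 * (\<Sum>j\<in>I. w j * u j)^2"
proof -
  have e: "\<And>j k. w j * w k * (u j - u k)^2 = w j * (u j)^2 * w k + w k * (u k)^2 * w j - 2 * ((w j * u j) * (w k * u k))"
    by (simp add: power2_eq_square algebra_simps)
  have "(\<Sum>j\<in>I. \<Sum>k\<in>I. w j * w k * (u j - u k)^2)
     = (\<Sum>j\<in>I. \<Sum>k\<in>I. w j * (u j)^2 * w k) + (\<Sum>j\<in>I. \<Sum>k\<in>I. w k * (u k)^2 * w j)
       - 2 * (\<Sum>j\<in>I. \<Sum>k\<in>I. (w j * u j) * (w k * u k))"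
    unfolding e by (simp add: sum.distrib sum_subtractf sum_distrib_left)
  also have "(\<Sum>j\<in>I. \<Sum>k\<in>I. w k * (u k)^2 * w j) = (\<Sum>j\<in>I. \<Sum>k\<in>I. w j * (u j)^2 * w k)"
    by (rule sum.swap)
  also have "(\<Sum>j\<in>I. \<Sum>k\<in>I. w j * (u j)^2 * w k) = (\<Sum>j\<in>I. w j * (u j)^2) * (\<Sum>k\<in>I. w k)"
    by (simp add: sum_product)
  also have "(\<Sum>j\<in>I. \<Sum>k\<in>I. (w j * u j) * (w k * u k)) = (\<Sum>j\<in>I. w j * u j)^2"
    by (simp add: sum_product power2_eq_square)
  finally show ?thesis by simp
qed

lemma dsum_lower:
  fixes f :: "'i \<Rightarrow> 'i \<Rightarrow> real" assumes "finite I" "i \<in> I" "\<And>j k. f j k \<ge> 0" "f i i = 0"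
  shows "(\<Sum>j\<in>I. \<Sum>k\<in>I. f j k) \<ge> (\<Sum>k\<in>I. f i k) + (\<Sum>j\<in>I. f j i)"
proof -
  have a: "(\<Sum>j\<in>I. \<Sum>k\<in>I. f j k) = (\<Sum>k\<in>I. f i k) + (\<Sum>j\<in>I-{i}. \<Sum>k\<in>I. f j k)"
    by (rule sum.remove[OF assms(1,2)])
  have b: "(\<Sum>j\<in>I-{i}. \<Sum>k\<in>I. f j k) \<ge> (\<Sum>j\<in>I-{i}. f j i)"
    using assms by (intro sum_mono member_le_sum) auto
  have c: "(\<Sum>j\<in>I-{i}. f j i) = (\<Sum>j\<in>I. f j i)"
    using sum.remove[OF assms(1,2), of "\<lambda>j. f j i"] assms(4) by simp
  show ?thesis using a b c by linarith
qed

lemma row_ineq: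
  fixes w u :: "'i \<Rightarrow> real" assumes "finite I" "i \<in> I" "\<And>j. w j \<ge> 0" "(\<Sum>j\<in>I. w j) = 1" "w i \<ge> \<alpha>"
  shows "(\<Sum>j\<in>I. w j * (u j)^2) - (\<Sum>j\<in>I. w j * u j)^2 \<ge> \<alpha> * (\<Sum>j\<in>I. (if j = i then 0 else w j) * (u i - u j)^2)"
proof -
  let ?f = "\<lambda>j k. w j * w k * (u j - u k)^2"
  have "(\<Sum>j\<in>I. \<Sum>k\<in>I. ?f j k) \<ge> (\<Sum>k\<in>I. ?f i k) + (\<Sum>j\<in>I. ?f j i)"
    using assms by (intro dsum_lower) auto
  also have "(\<Sum>k\<in>I. ?f i k) + (\<Sum>j\<in>I. ?f j i) = 2 * (w i * (\<Sum>k\<in>I. w k * (u i - u k)^2))"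
    by (simp add: sum_distrib_left power2_commute algebra_simps sum.distrib[symmetric])
  finally have 1: "2 * (w i * (\<Sum>k\<in>I. w k * (u i - u k)^2)) \<le> 2 * ((\<Sum>j\<in>I. w j * (u j)^2) - (\<Sum>j\<in>I. w j * u j)^2)"
    using dsum_ident[OF assms(1), of w u] assms(4) by simp
  have s0: "0 \<le> (\<Sum>k\<in>I. (if k = i then 0 else w k) * (u i - u k)^2)"
    using assms by (intro sum_nonneg) auto
  have "\<alpha> * (\<Sum>k\<in>I. (if k = i then 0 else w k) * (u i - u k)^2) \<le> w i * (\<Sum>k\<in>I. (if k = i then 0 else w k) * (u i - u k)^2)"
    using s0 assms(5) by (intro mult_right_mono) auto
  also have "\<dots> \<le> w i * (\<Sum>k\<in>I. w k * (u i - u k)^2)"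
    using assms by (intro mult_left_mono sum_mono) auto
  also have "\<dots> \<le> (\<Sum>j\<in>I. w j * (u j)^2) - (\<Sum>j\<in>I. w j * u j)^2"
    using 1 by simp
  finally show ?thesis .
qed

definition off :: "real^'n^'n \<Rightarrow> 'n \<Rightarrow> 'n \<Rightarrow> real" where
  "off B i j = (if j = i then 0 else B$i$j)"

definition colsum :: "real^'n^'n \<Rightarrow> 'n \<Rightarrow> real" where
  "colsum B j = (\<Sum>i\<in>UNIV. laplacian B $ i $ j)"

definition Ssum :: "real^'n^'n \<Rightarrow> real^'n \<Rightarrow> real" where
  "Ssum B v = (\<Sum>i\<in>UNIV. (laplacian B *v v) $ i)"

definition good :: "real \<Rightarrow> real \<Rightarrow> real^'n^'n \<Rightarrow> bool" where
  "good amax \<alpha> B \<longleftrightarrow> (\<forall>i j. 0 \<le> B$i$j) \<and> (\<forall>i. (\<Sum>l\<in>UNIV. B$i$l) = 1)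
     \<and> (\<forall>i j. i \<noteq> j \<longrightarrow> B$i$j \<le> amax) \<and> (\<forall>i. \<alpha> \<le> B$i$i)"

lemma q_J: "v \<bullet> ((transpose (laplacian B) ** ones_mat ** laplacian B) *v v) = (Ssum B v)^2"
proof -
  let ?w = "laplacian B *v v"
  have "(transpose (laplacian B) ** ones_mat ** laplacian B) *v v = transpose (laplacian B) *v (ones_mat *v ?w)"
    by (simp add: matrix_vector_mul_assoc matrix_mul_assoc)
  then have "v \<bullet> ((transpose (laplacian B) ** ones_mat ** laplacian B) *v v) = (ones_mat *v ?w) \<bullet> ?w"
    by (simp, metis inner_commute dot_lmul_matrix)
  also have "\<dots> = (\<Sum>i\<in>UNIV. Ssum B v * ?w $ i)"
    by (simp add: inner_vec_def ones_mat_def matrix_vector_mult_def Ssum_def)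
  also have "\<dots> = (Ssum B v)^2"
    by (simp add: sum_distrib_left[symmetric] Ssum_def power2_eq_square)
  finally show ?thesis .
qed

lemma q_R: "v \<bullet> ((laplacian B + transpose (laplacian B) - transpose (laplacian B) ** laplacian B) *v v)
   = 2 * (v \<bullet> (laplacian B *v v)) - (laplacian B *v v) \<bullet> (laplacian B *v v)"
proof -
  let ?L = "laplacian B"
  have "v \<bullet> ((?L + transpose ?L - transpose ?L ** ?L) *v v)
     = v \<bullet> (?L *v v) + v \<bullet> (transpose ?L *v v) - v \<bullet> (transpose ?L *v (?L *v v))"
    by (simp add: matrix_vector_mult_add_rdistrib matrix_vector_mult_diff_rdistrib inner_diff_right
        inner_add_right matrix_vector_mul_assoc)
  also have "v \<bullet> (transpose ?L *v v) = v \<bullet> (?L *v v)"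
    by (simp, metis inner_commute dot_lmul_matrix)
  also have "v \<bullet> (transpose ?L *v (?L *v v)) = (?L *v v) \<bullet> (?L *v v)"
    by (simp, metis inner_commute dot_lmul_matrix)
  finally show ?thesis by simp
qed

lemma S_col: "Ssum B v = (\<Sum>j\<in>UNIV. v$j * colsum B j)"
proof -
  have "Ssum B v = (\<Sum>i\<in>UNIV. \<Sum>j\<in>UNIV. laplacian B $ i $ j * v $ j)"
    by (simp add: Ssum_def matrix_vector_mult_def)
  also have "\<dots> = (\<Sum>j\<in>UNIV. \<Sum>i\<in>UNIV. laplacian B $ i $ j * v $ j)"
    by (rule sum.swap)
  also have "\<dots> = (\<Sum>j\<in>UNIV. v$j * colsum B j)"
    by (simp add: colsum_def sum_distrib_left mult.commute)
  finally show ?thesis .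
qed

lemma S_off: "Ssum B v = (\<Sum>i\<in>UNIV. \<Sum>j\<in>UNIV. off B i j * (v$i - v$j))"
  unfolding Ssum_def off_def lap_mv by simp

lemma colsum_eq: "colsum B j = (\<Sum>k\<in>UNIV-{j}. B$j$k) - (\<Sum>i\<in>UNIV-{j}. B$i$j)"
proof -
  have "colsum B j = laplacian B $ j $ j + (\<Sum>i\<in>UNIV-{j}. laplacian B $ i $ j)"
    unfolding colsum_def by (rule sum.remove) auto
  also have "(\<Sum>i\<in>UNIV-{j}. laplacian B $ i $ j) = (\<Sum>i\<in>UNIV-{j}. - B $ i $ j)"
    by (intro sum.cong) (auto simp: laplacian_def)
  finally show ?thesis by (simp add: laplacian_def sum_negf)
qed

lemma pw:
  assumes g: "good amax \<alpha> B"
  shows "2 * (v \<bullet> (laplacian B *v v)) - (laplacian B *v v) \<bullet> (laplacian B *v v)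
           - (\<Sum>j\<in>UNIV. (v$j)^2 * colsum B j)
         \<ge> \<alpha> * (\<Sum>i\<in>UNIV. \<Sum>j\<in>UNIV. off B i j * (v$i - v$j)^2)"
proof -
  define m where "m i = (\<Sum>j\<in>UNIV. B$i$j * v$j)" for i
  have rs: "\<And>i. (\<Sum>l\<in>UNIV. B$i$l) = 1" and nn: "\<And>i j. 0 \<le> B$i$j" and dg: "\<And>i. \<alpha> \<le> B$i$i"
    using g by (auto simp: good_def)
  have lv: "(laplacian B *v v) $ i = v$i - m i" for i
  proof -
    have "(laplacian B *v v) $ i = (\<Sum>j\<in>UNIV. B$i$j * (v$i - v$j))"
      unfolding lap_mv by (intro sum.cong) auto
    also have "\<dots> = v$i * (\<Sum>j\<in>UNIV. B$i$j) - m i"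
      by (simp add: m_def algebra_simps sum_subtractf sum_distrib_left)
    finally show ?thesis using rs by simp
  qed
  have cs: "colsum B j = 1 - (\<Sum>i\<in>UNIV. B$i$j)" for j
  proof -
    have "(\<Sum>k\<in>UNIV-{j}. B$j$k) = 1 - B$j$j"
      using rs[of j] sum.remove[of UNIV j "\<lambda>k. B$j$k"] by simp
    moreover have "(\<Sum>i\<in>UNIV. B$i$j) = B$j$j + (\<Sum>i\<in>UNIV-{j}. B$i$j)"
      by (rule sum.remove) auto
    ultimately show ?thesis by (simp add: colsum_eq)
  qed
  have "2 * (v \<bullet> (laplacian B *v v)) - (laplacian B *v v) \<bullet> (laplacian B *v v)
           - (\<Sum>j\<in>UNIV. (v$j)^2 * colsum B j)
       = (\<Sum>i\<in>UNIV. 2 * (v$i * (v$i - m i)) - (v$i - m i) * (v$i - m i)) - (\<Sum>j\<in>UNIV. (v$j)^2 * (1 - (\<Sum>i\<in>UNIV. B$i$j)))"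
    by (simp add: inner_vec_def lv cs sum_subtractf sum_distrib_left)
  also have "\<dots> = (\<Sum>i\<in>UNIV. (\<Sum>j\<in>UNIV. B$i$j * (v$j)^2) - (m i)^2)"
  proof -
    have e1: "(\<Sum>i\<in>UNIV. 2 * (v$i * (v$i - m i)) - (v$i - m i) * (v$i - m i)) = (\<Sum>i\<in>UNIV. (v$i)^2) - (\<Sum>i\<in>UNIV. (m i)^2)"
      by (simp add: sum_subtractf[symmetric] power2_eq_square algebra_simps)
    have e2: "(\<Sum>j\<in>UNIV. (v$j)^2 * (1 - (\<Sum>i\<in>UNIV. B$i$j))) = (\<Sum>j\<in>UNIV. (v$j)^2) - (\<Sum>j\<in>UNIV. \<Sum>i\<in>UNIV. B$i$j * (v$j)^2)"
      by (simp add: sum_subtractf[symmetric] sum_distrib_left algebra_simps)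
    have e3: "(\<Sum>j\<in>UNIV. \<Sum>i\<in>UNIV. B$i$j * (v$j)^2) = (\<Sum>i\<in>UNIV. \<Sum>j\<in>UNIV. B$i$j * (v$j)^2)"
      by (rule sum.swap)
    show ?thesis unfolding e1 e2 e3 by (simp add: sum_subtractf)
  qed
  also have "\<dots> \<ge> (\<Sum>i\<in>UNIV. \<alpha> * (\<Sum>j\<in>UNIV. off B i j * (v$i - v$j)^2))"
    unfolding m_def off_def
    by (intro sum_mono row_ineq[where w="\<lambda>j. B$_$j"]) (use rs nn dg in auto)
  finally show ?thesis by (simp add: sum_distrib_left)
qed



lemma traj_cong: "(\<And>t. t < s \<Longrightarrow> B t u = C t w) \<Longrightarrow> traj B x0 s u = traj C x0 s w"
  by (induction s) auto

lemma good_le1: "good amax \<alpha> B \<Longrightarrow> 0 \<le> B$i$j \<and> B$i$j \<le> 1"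
proof -
  assume g: "good amax \<alpha> B"
  then have "0 \<le> B$i$j" "(\<Sum>l\<in>UNIV. B$i$l) = 1" "\<forall>l. 0 \<le> B$i$l" by (auto simp: good_def)
  moreover have "B$i$j \<le> (\<Sum>l\<in>UNIV. B$i$l)" using calculation by (intro member_le_sum) auto
  ultimately show ?thesis by simp
qed

lemma good_norm: "good amax \<alpha> B \<Longrightarrow> norm B \<le> real CARD('n) * real CARD('n)" for B :: "real^'n^'n"
proof -
  assume g: "good amax \<alpha> B"
  have "norm B \<le> (\<Sum>i\<in>UNIV. \<Sum>j\<in>UNIV. \<bar>B$i$j\<bar>)" by (rule norm_mat_le)
  also have "\<dots> \<le> (\<Sum>i\<in>(UNIV::'n set). \<Sum>j\<in>(UNIV::'n set). 1)"
    using good_le1[OF g] by (intro sum_mono) auto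
  finally show ?thesis by simp
qed

lemma good_step: "good amax \<alpha> B \<Longrightarrow> (v - laplacian B *v v) $ i = (\<Sum>j\<in>UNIV. B$i$j * v$j)"
proof -
  assume g: "good amax \<alpha> B"
  have rs: "(\<Sum>l\<in>UNIV. B$i$l) = 1" using g by (auto simp: good_def)
  have "(laplacian B *v v) $ i = (\<Sum>j\<in>UNIV. B$i$j * (v$i - v$j))"
    unfolding lap_mv by (intro sum.cong) auto
  also have "\<dots> = v$i * (\<Sum>j\<in>UNIV. B$i$j) - (\<Sum>j\<in>UNIV. B$i$j * v$j)"
    by (simp add: algebra_simps sum_subtractf sum_distrib_left)
  finally show ?thesis using rs by simp
qed

locale setting = prob_space M for M :: "'a measure" +
  fixes A :: "nat \<Rightarrow> 'a \<Rightarrow> real^'n^'n" and amax \<alpha> :: real and x0 :: "real^'n"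
  assumes indep: "indep_vars (\<lambda>_. borel) A UNIV"
    and goodAE: "AE \<omega> in M. \<forall>t. good amax \<alpha> (A t \<omega>)"
begin

abbreviation "x \<equiv> traj A x0"

definition Fs :: "nat \<Rightarrow> (nat \<Rightarrow> real^'n^'n) \<Rightarrow> real^'n" where
  "Fs s h = traj (\<lambda>t _. h t) x0 s ()"

lemma measA[measurable]: "A t \<in> borel_measurable M"
  using indep unfolding indep_vars_def by auto

lemma cont_step: "continuous_on UNIV (\<lambda>p::(real^'n^'n) \<times> (real^'n). snd p - laplacian (fst p) *v snd p)"
  by (intro continuous_intros)

lemma measX: "x s \<in> borel_measurable M"
proof (induction s)
  case 0 then show ?case by simp
next
  case (Suc s)
  have "(\<lambda>\<omega>. (A s \<omega>, x s \<omega>)) \<in> borel_measurable M"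
    using Suc by (subst borel_prod[symmetric]) (intro measurable_Pair measA)
  from borel_measurable_continuous_on[OF cont_step this] show ?case by simp
qed

lemma measFs: "s \<le> m \<Longrightarrow> Fs s \<in> borel_measurable (PiM {..<m} (\<lambda>_. borel))"
proof (induction s)
  case 0 then show ?case by (simp add: Fs_def)
next
  case (Suc s)
  have "(\<lambda>h. (h s, Fs s h)) \<in> borel_measurable (PiM {..<m} (\<lambda>_. borel))"
    using Suc by (subst borel_prod[symmetric]) (intro measurable_Pair measurable_component_singleton[of s "{..<m}" "\<lambda>_. borel", simplified]; simp)
  from borel_measurable_continuous_on[OF cont_step this] show ?case by (simp add: Fs_def)
qed

lemma x_Fs: "x s \<omega> = Fs s (restrict (\<lambda>i. A i \<omega>) {..<s})"
  unfolding Fs_def by (rule traj_cong) auto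

definition cx where "cx = (\<Sum>i\<in>UNIV. \<bar>x0$i\<bar>)"

lemma x_bound_pt: "(\<forall>t. good amax \<alpha> (A t \<omega>)) \<Longrightarrow> \<bar>x s \<omega> $ i\<bar> \<le> cx"
proof (induction s arbitrary: i)
  case 0 then show ?case unfolding cx_def using member_le_sum[of i UNIV "\<lambda>i. \<bar>x0$i\<bar>"] by simp
next
  case (Suc s)
  have g: "good amax \<alpha> (A s \<omega>)" using Suc by auto
  have "\<bar>x (Suc s) \<omega> $ i\<bar> = \<bar>\<Sum>j\<in>UNIV. A s \<omega> $i$j * x s \<omega> $ j\<bar>"
    using good_step[OF g] by simp
  also have "\<dots> \<le> (\<Sum>j\<in>UNIV. A s \<omega> $i$j * cx)"
    using Suc good_le1[OF g] by (intro order.trans[OF sum_abs] sum_mono) (auto simp: abs_mult intro!: mult_left_mono)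
  also have "\<dots> = cx" using g by (simp add: good_def sum_distrib_right[symmetric])
  finally show ?case .
qed

lemma x_bound: "AE \<omega> in M. norm (x s \<omega>) \<le> real CARD('n) * cx"
  using goodAE
proof eventually_elim
  case (elim \<omega>)
  have "norm (x s \<omega>) \<le> (\<Sum>i\<in>UNIV. \<bar>x s \<omega> $ i\<bar>)" by (rule norm_le_l1_cart)
  also have "\<dots> \<le> (\<Sum>i\<in>(UNIV::'n set). cx)" using x_bound_pt[OF elim] by (intro sum_mono) auto
  finally show ?case by simp
qed

lemma intXA:
  fixes h :: "(real^'n) \<times> (real^'n^'n) \<Rightarrow> real"
  assumes "continuous_on UNIV h"
  shows "integrable M (\<lambda>\<omega>. h (x s \<omega>, A t \<omega>))"
proof -
  obtain C where C: "\<forall>p. norm p \<le> real CARD('n) * cx + real CARD('n) * real CARD('n) \<longrightarrow> norm (h p) \<le> C"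
    using cont_bound[OF assms] by blast
  have "AE \<omega> in M. norm (h (x s \<omega>, A t \<omega>)) \<le> C"
    using x_bound[of s] goodAE
  proof eventually_elim
    case (elim \<omega>)
    have "norm (x s \<omega>, A t \<omega>) \<le> norm (x s \<omega>) + norm (A t \<omega>)" by (rule norm_Pair_le)
    also have "\<dots> \<le> real CARD('n) * cx + real CARD('n) * real CARD('n)"
      using elim good_norm[of amax \<alpha> "A t \<omega>"] by auto
    finally show ?case using C by blast
  qed
  moreover have "(\<lambda>\<omega>. (x s \<omega>, A t \<omega>)) \<in> borel_measurable M"
    by (subst borel_prod[symmetric]) (intro measurable_Pair measA measX)
  ultimately show ?thesis
    by (intro integrable_const_bound borel_measurable_continuous_on[OF assms]) auto
qed

lemma intX: "continuous_on UNIV (f :: real^'n \<Rightarrow> real) \<Longrightarrow> integrable M (\<lambda>\<omega>. f (x s \<omega>))"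
  using intXA[of "\<lambda>p. f (fst p)" s 0] continuous_on_compose2[of UNIV f UNIV fst] by (simp add: continuous_on_fst[OF continuous_on_id])

lemma intA: "continuous_on UNIV (g :: real^'n^'n \<Rightarrow> real) \<Longrightarrow> integrable M (\<lambda>\<omega>. g (A t \<omega>))"
  using intXA[of "\<lambda>p. g (snd p)" 0 t] continuous_on_compose2[of UNIV g UNIV snd] by (simp add: continuous_on_snd[OF continuous_on_id])

lemma indep_fg:
  fixes f :: "real^'n \<Rightarrow> real" and g :: "real^'n^'n \<Rightarrow> real"
  assumes f: "continuous_on UNIV f" and g: "continuous_on UNIV g"
  shows "(\<integral>\<omega>. f (x s \<omega>) * g (A s \<omega>) \<partial>M) = (\<integral>\<omega>. f (x s \<omega>) \<partial>M) * (\<integral>\<omega>. g (A s \<omega>) \<partial>M)"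
proof -
  have iv: "indep_var (PiM {..<s} (\<lambda>_. borel)) (\<lambda>\<omega>. restrict (\<lambda>i. A i \<omega>) {..<s})
                      (PiM {s} (\<lambda>_. borel)) (\<lambda>\<omega>. restrict (\<lambda>i. A i \<omega>) {s})"
    by (rule indep_var_restrict[OF indep]) auto
  have m1: "(\<lambda>h. f (Fs s h)) \<in> borel_measurable (PiM {..<s} (\<lambda>_. borel))"
    by (intro borel_measurable_continuous_on[OF f] measFs) simp
  have m2: "(\<lambda>h. g (h s)) \<in> borel_measurable (PiM {s} (\<lambda>_. borel))"
    by (intro borel_measurable_continuous_on[OF g] measurable_component_singleton[of s "{s}" "\<lambda>_. borel", simplified]) simp
  have "indep_var borel ((\<lambda>h. f (Fs s h)) \<circ> (\<lambda>\<omega>. restrict (\<lambda>i. A i \<omega>) {..<s}))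
                   borel ((\<lambda>h. g (h s)) \<circ> (\<lambda>\<omega>. restrict (\<lambda>i. A i \<omega>) {s}))"
    by (rule indep_var_compose[OF iv m1 m2])
  also have "((\<lambda>h. f (Fs s h)) \<circ> (\<lambda>\<omega>. restrict (\<lambda>i. A i \<omega>) {..<s})) = (\<lambda>\<omega>. f (x s \<omega>))"
    by (simp add: comp_def x_Fs)
  also have "((\<lambda>h. g (h s)) \<circ> (\<lambda>\<omega>. restrict (\<lambda>i. A i \<omega>) {s})) = (\<lambda>\<omega>. g (A s \<omega>))"
    by (simp add: comp_def)
  finally have "indep_var borel (\<lambda>\<omega>. f (x s \<omega>)) borel (\<lambda>\<omega>. g (A s \<omega>))" .
  then show ?thesis
    by (intro indep_var_lebesgue_integral intX intA f g)
qed

end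


definition Qf :: "real^'n^'n \<Rightarrow> real^'n^'n" where
  "Qf B = transpose (laplacian B) ** ones_mat ** laplacian B"
definition Rf :: "real^'n^'n \<Rightarrow> real^'n^'n" where
  "Rf B = laplacian B + transpose (laplacian B) - transpose (laplacian B) ** laplacian B"

lemma qf: "v \<bullet> (X *v v) = (\<Sum>i\<in>UNIV. \<Sum>j\<in>UNIV. v$i * v$j * X$i$j)"
  by (simp add: inner_vec_def matrix_vector_mult_def sum_distrib_left ac_simps)

lemma sum_pair: "(\<Sum>i\<in>UNIV. \<Sum>j\<in>UNIV. g i j) = (\<Sum>p\<in>UNIV. g (fst p) (snd p))"
  by (subst sum.cartesian_product) (simp add: split_def)

lemma (in finite_measure) integral_dsum:
  fixes g :: "'i \<Rightarrow> 'j \<Rightarrow> 'a \<Rightarrow> real"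
  assumes "\<And>i j. integrable M (g i j)"
  shows "(\<integral>\<omega>. (\<Sum>i\<in>I. \<Sum>j\<in>J. g i j \<omega>) \<partial>M) = (\<Sum>i\<in>I. \<Sum>j\<in>J. integral\<^sup>L M (g i j))"
proof -
  have "(\<integral>\<omega>. (\<Sum>i\<in>I. \<Sum>j\<in>J. g i j \<omega>) \<partial>M) = (\<Sum>i\<in>I. \<integral>\<omega>. (\<Sum>j\<in>J. g i j \<omega>) \<partial>M)"
    by (rule Bochner_Integration.integral_sum) (intro Bochner_Integration.integrable_sum assms)
  also have "\<dots> = (\<Sum>i\<in>I. \<Sum>j\<in>J. integral\<^sup>L M (g i j))"
    by (intro sum.cong refl Bochner_Integration.integral_sum assms)
  finally show ?thesis .
qed

lemma cont_fst: "continuous_on UNIV g \<Longrightarrow> continuous_on UNIV (\<lambda>p. g (fst p))"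
  using continuous_on_compose2[of UNIV g UNIV fst] by (simp add: continuous_on_fst[OF continuous_on_id])
lemma cont_snd: "continuous_on UNIV g \<Longrightarrow> continuous_on UNIV (\<lambda>p. g (snd p))"
  using continuous_on_compose2[of UNIV g UNIV snd] by (simp add: continuous_on_snd[OF continuous_on_id])

lemma cont_Qf: "continuous_on UNIV (\<lambda>B. Qf B $ i $ j)"
  unfolding Qf_def by (intro continuous_intros)
lemma cont_Rf: "continuous_on UNIV (\<lambda>B. Rf B $ i $ j)"
  unfolding Rf_def by (intro continuous_intros)
lemma cont_off: "continuous_on UNIV (\<lambda>B. off B i j)"
  unfolding off_def by (intro continuous_intros)
lemma cont_colsum: "continuous_on UNIV (\<lambda>B. colsum B j)"
  unfolding colsum_def by (intro continuous_intros)

context setting begin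

lemma QEa:
  assumes F: "\<And>i j. continuous_on UNIV (\<lambda>B. F B $ i $ j)"
  shows "v \<bullet> (mat_expectation M (\<lambda>\<omega>. F (A t \<omega>)) *v v) = (\<integral>\<omega>. v \<bullet> (F (A t \<omega>) *v v) \<partial>M)"
proof -
  have int: "integrable M (\<lambda>\<omega>. v$i * v$j * F (A t \<omega>) $ i $ j)" for i j
    by (intro integrable_mult_right intA F)
  show ?thesis
    unfolding qf by (subst integral_dsum[OF int]) (simp add: mat_expectation_def)
qed

lemma QEb:
  assumes F: "\<And>i j. continuous_on UNIV (\<lambda>B. F B $ i $ j)"
  shows "(\<integral>\<omega>. x s \<omega> \<bullet> (F (A s \<omega>) *v x s \<omega>) \<partial>M)
       = (\<integral>\<omega>. x s \<omega> \<bullet> (mat_expectation M (\<lambda>\<omega>. F (A s \<omega>)) *v x s \<omega>) \<partial>M)"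
proof -
  have int1: "integrable M (\<lambda>\<omega>. x s \<omega> $ i * x s \<omega> $ j * F (A s \<omega>) $ i $ j)" for i j
    using intXA[of "\<lambda>p. fst p $ i * fst p $ j * F (snd p) $ i $ j" s s]
    by (simp add: continuous_intros cont_snd[OF F])
  have int2: "integrable M (\<lambda>\<omega>. x s \<omega> $ i * x s \<omega> $ j * c)" for i j c
    by (intro integrable_mult_left intX continuous_intros)
  have "(\<integral>\<omega>. x s \<omega> $ i * x s \<omega> $ j * F (A s \<omega>) $ i $ j \<partial>M)
      = (\<integral>\<omega>. x s \<omega> $ i * x s \<omega> $ j \<partial>M) * (\<integral>\<omega>. F (A s \<omega>) $ i $ j \<partial>M)" for i j
  proof -
    have c: "continuous_on UNIV (\<lambda>v::real^'n. v $ i * v $ j)" by (intro continuous_intros)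
    show ?thesis using indep_fg[OF c F[of i j], of s] by simp
  qed
  then show ?thesis
    unfolding qf by (simp add: integral_dsum[OF int1] integral_dsum[OF int2] mat_expectation_def)
qed

end

locale setting2 = setting M A amax \<alpha> x0
  for M :: "'a measure" and A :: "nat \<Rightarrow> 'a \<Rightarrow> real^'n^'n" and amax \<alpha> :: real and x0 :: "real^'n" +
  assumes zero_col: "\<And>t. ones_vec v* mat_expectation M (\<lambda>\<omega>. laplacian (A t \<omega>)) = 0"
    and amax_pos: "amax > 0" and alpha_pos: "\<alpha> > 0"
    and uncorr: "\<And>t i j k l. i \<noteq> j \<Longrightarrow> k \<noteq> l \<Longrightarrow> (i, j) \<noteq> (k, l) \<Longrightarrow>
        integral\<^sup>L M (\<lambda>\<omega>. A t \<omega> $ i $ j * A t \<omega> $ k $ l)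
        = integral\<^sup>L M (\<lambda>\<omega>. A t \<omega> $ i $ j) * integral\<^sup>L M (\<lambda>\<omega>. A t \<omega> $ k $ l)"
begin

lemma E_colsum: "(\<integral>\<omega>. colsum (A t \<omega>) j \<partial>M) = 0"
proof -
  have "0 = (ones_vec v* mat_expectation M (\<lambda>\<omega>. laplacian (A t \<omega>))) $ j" using zero_col by simp
  also have "\<dots> = (\<Sum>i\<in>UNIV. \<integral>\<omega>. laplacian (A t \<omega>) $ i $ j \<partial>M)"
    by (simp add: vector_matrix_mult_def ones_vec_def mat_expectation_def)
  also have "\<dots> = (\<integral>\<omega>. colsum (A t \<omega>) j \<partial>M)"
    unfolding colsum_def
    by (rule Bochner_Integration.integral_sum[symmetric]) (intro intA continuous_intros)
  finally show ?thesis by simp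
qed

lemma E_Ssum: "(\<integral>\<omega>. Ssum (A t \<omega>) v \<partial>M) = 0"
proof -
  have "(\<integral>\<omega>. Ssum (A t \<omega>) v \<partial>M) = (\<Sum>j\<in>UNIV. v$j * (\<integral>\<omega>. colsum (A t \<omega>) j \<partial>M))"
    unfolding S_col
    by (subst Bochner_Integration.integral_sum) (auto intro!: integrable_mult_right intA cont_colsum)
  then show ?thesis by (simp add: E_colsum)
qed

end


lemma mat_le_intro:
  fixes X Y :: "real^'n^'n"
  assumes "\<And>v. v \<bullet> (X *v v) \<le> c * (v \<bullet> (Y *v v))"
  shows "mat_le X (c *\<^sub>R Y)"
  unfolding mat_le_def
proof
  fix v :: "real^'n"
  have "(X - c *\<^sub>R Y) *v v = X *v v - c *\<^sub>R (Y *v v)"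
    by (simp add: matrix_vector_mult_diff_rdistrib scaleR_matrix_vector_assoc)
  then show "v \<bullet> ((X - c *\<^sub>R Y) *v v) \<le> 0" using assms[of v] by (simp add: inner_diff_right)
qed

context setting2 begin

lemma int_off2: "integrable M (\<lambda>\<omega>. c * (off (A t \<omega>) i j * off (A t \<omega>) k l))"
  by (intro integrable_mult_right intA continuous_intros cont_off)

lemma int_offp: "integrable M (\<lambda>\<omega>. off (A t \<omega>) i j * off (A t \<omega>) k l)"
  using int_off2[of 1] by simp

lemma int_off: "integrable M (\<lambda>\<omega>. off (A t \<omega>) i j)"
  by (intro intA cont_off)

lemma cov:
  "(\<integral>\<omega>. off (A t \<omega>) (fst p) (snd p) * off (A t \<omega>) (fst q) (snd q) \<partial>M)
   = (\<integral>\<omega>. off (A t \<omega>) (fst p) (snd p) \<partial>M) * (\<integral>\<omega>. off (A t \<omega>) (fst q) (snd q) \<partial>M)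
     + (if p = q then (\<integral>\<omega>. off (A t \<omega>) (fst p) (snd p) * off (A t \<omega>) (fst p) (snd p) \<partial>M)
                       - (\<integral>\<omega>. off (A t \<omega>) (fst p) (snd p) \<partial>M)^2 else 0)"
proof (cases "p = q")
  case True then show ?thesis by (simp add: power2_eq_square)
next
  case False
  note pq = False
  obtain i j k l where p: "p = (i,j)" and q: "q = (k,l)" by (cases p, cases q) auto
  show ?thesis
  proof (cases "i = j \<or> k = l")
    case True then show ?thesis using pq by (auto simp: p q off_def)
  next
    case nd: False
    then have "j \<noteq> i" "l \<noteq> k" "i \<noteq> j" "k \<noteq> l" by auto
    moreover have "(i, j) \<noteq> (k, l)" using pq p q by simp
    ultimately show ?thesis using pq uncorr[of i j k l t] by (auto simp: p q off_def)
  qed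
qed

lemma off_bounds: "good amax \<alpha> B \<Longrightarrow> 0 \<le> off B i j \<and> off B i j \<le> amax"
  using amax_pos by (auto simp: off_def good_def)

lemma P1:
  fixes v :: "real^'n"
  shows "v \<bullet> (mat_expectation M (\<lambda>\<omega>. Qf (A t \<omega>)) *v v)
    \<le> (amax/\<alpha>) * (v \<bullet> (mat_expectation M (\<lambda>\<omega>. Rf (A t \<omega>)) *v v))"
proof -
  define ob where "ob p \<omega> = off (A t \<omega>) (fst p) (snd p)" for p \<omega>
  define dd where "dd p = v$fst p - v$snd p" for p :: "'n \<times> 'n"
  define a where "a p = (\<integral>\<omega>. ob p \<omega> \<partial>M)" for p
  define c where "c p = (\<integral>\<omega>. ob p \<omega> * ob p \<omega> \<partial>M) - (a p)^2" for p
  define K where "K = (\<Sum>p\<in>UNIV. dd p * dd p * a p)"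
  have into: "integrable M (ob p)" for p unfolding ob_def by (rule int_off)
  have L: "v \<bullet> (mat_expectation M (\<lambda>\<omega>. Qf (A t \<omega>)) *v v) = (\<integral>\<omega>. (Ssum (A t \<omega>) v)^2 \<partial>M)"
    unfolding QEa[OF cont_Qf] unfolding Qf_def q_J ..
  have S: "Ssum (A t \<omega>) v = (\<Sum>p\<in>UNIV. ob p \<omega> * dd p)" for \<omega>
    unfolding S_off sum_pair ob_def dd_def ..
  have Ssq: "(Ssum (A t \<omega>) v)^2 = (\<Sum>p\<in>UNIV. \<Sum>q\<in>UNIV. dd p * dd q * (ob p \<omega> * ob q \<omega>))" for \<omega>
    unfolding S power2_eq_square sum_product by (intro sum.cong refl) (simp add: ac_simps)
  have I1: "(\<integral>\<omega>. (Ssum (A t \<omega>) v)^2 \<partial>M) = (\<Sum>p\<in>UNIV. \<Sum>q\<in>UNIV. dd p * dd q * (\<integral>\<omega>. ob p \<omega> * ob q \<omega> \<partial>M))"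
    unfolding Ssq by (subst integral_dsum) (auto simp: ob_def int_off2 int_offp)
  also have "\<dots> = (\<Sum>p\<in>UNIV. \<Sum>q\<in>UNIV. dd p * dd q * (a p * a q) + (if q = p then dd p * dd p * c p else 0))"
    unfolding a_def c_def ob_def by (intro sum.cong refl) (subst cov, auto simp: algebra_simps)
  also have "\<dots> = (\<Sum>p\<in>UNIV. dd p * a p)^2 + (\<Sum>p\<in>UNIV. dd p * dd p * c p)"
    by (simp add: sum.distrib power2_eq_square sum_product ac_simps)
  also have "(\<Sum>p\<in>UNIV. dd p * a p) = 0"
  proof -
    have "(\<Sum>p\<in>UNIV. dd p * a p) = (\<integral>\<omega>. (\<Sum>p\<in>UNIV. ob p \<omega> * dd p) \<partial>M)"
      unfolding a_def by (subst Bochner_Integration.integral_sum) (auto simp: into ac_simps)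
    also have "\<dots> = 0" unfolding S[symmetric] by (rule E_Ssum)
    finally show ?thesis .
  qed
  also have "(\<Sum>p\<in>UNIV. dd p * dd p * c p) \<le> (\<Sum>p\<in>UNIV. dd p * dd p * (amax * a p))"
  proof (intro sum_mono mult_left_mono)
    fix p
    have "(\<integral>\<omega>. ob p \<omega> * ob p \<omega> \<partial>M) \<le> (\<integral>\<omega>. amax * ob p \<omega> \<partial>M)"
    proof (rule integral_mono_AE)
      show "integrable M (\<lambda>\<omega>. ob p \<omega> * ob p \<omega>)" using int_off2[of 1] by (simp add: ob_def)
      show "integrable M (\<lambda>\<omega>. amax * ob p \<omega>)" using into by simp
      show "AE \<omega> in M. ob p \<omega> * ob p \<omega> \<le> amax * ob p \<omega>"
        using goodAE by eventually_elim (use off_bounds in \<open>auto simp: ob_def intro!: mult_right_mono\<close>)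
    qed
    also have "(\<integral>\<omega>. amax * ob p \<omega> \<partial>M) = amax * a p" unfolding a_def by simp
    finally show "c p \<le> amax * a p" unfolding c_def a_def using zero_le_power2[of "integral\<^sup>L M (ob p)"] by linarith
  qed simp
  finally have Lb: "(\<integral>\<omega>. (Ssum (A t \<omega>) v)^2 \<partial>M) \<le> amax * K"
    unfolding K_def by (simp add: sum_distrib_left ac_simps)
  define pwE where "pwE B = 2 * (v \<bullet> (laplacian B *v v)) - (laplacian B *v v) \<bullet> (laplacian B *v v)
           - (\<Sum>j\<in>UNIV. (v$j)^2 * colsum B j)" for B
  define gE where "gE B = (\<Sum>j\<in>UNIV. (v$j)^2 * colsum B j)" for B
  have R: "v \<bullet> (mat_expectation M (\<lambda>\<omega>. Rf (A t \<omega>)) *v v) = (\<integral>\<omega>. pwE (A t \<omega>) + gE (A t \<omega>) \<partial>M)"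
    unfolding QEa[OF cont_Rf] unfolding Rf_def q_R pwE_def gE_def by simp
  have cpw: "continuous_on UNIV pwE" unfolding pwE_def by (intro continuous_intros cont_colsum)
  have cg: "continuous_on UNIV gE" unfolding gE_def by (intro continuous_intros cont_colsum)
  have g0: "(\<integral>\<omega>. gE (A t \<omega>) \<partial>M) = 0"
    unfolding gE_def
    by (subst Bochner_Integration.integral_sum) (auto intro!: integrable_mult_right intA cont_colsum simp: E_colsum)
  have "\<alpha> * K = (\<integral>\<omega>. \<alpha> * (\<Sum>i\<in>UNIV. \<Sum>j\<in>UNIV. off (A t \<omega>) i j * (v$i - v$j)^2) \<partial>M)"
  proof -
    have "(\<integral>\<omega>. (\<Sum>i\<in>UNIV. \<Sum>j\<in>UNIV. off (A t \<omega>) i j * (v$i - v$j)^2) \<partial>M)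
        = (\<Sum>i\<in>UNIV. \<Sum>j\<in>UNIV. (\<integral>\<omega>. off (A t \<omega>) i j \<partial>M) * (v$i - v$j)^2)"
      by (subst integral_dsum) (auto intro!: integrable_mult_left int_off)
    also have "\<dots> = K"
      unfolding K_def sum_pair a_def ob_def dd_def by (simp add: power2_eq_square ac_simps)
    finally show ?thesis by simp
  qed
  also have "\<dots> \<le> (\<integral>\<omega>. pwE (A t \<omega>) \<partial>M)"
  proof (rule integral_mono_AE)
    show "integrable M (\<lambda>\<omega>. pwE (A t \<omega>))" by (rule intA[OF cpw])
    show "integrable M (\<lambda>\<omega>. \<alpha> * (\<Sum>i\<in>UNIV. \<Sum>j\<in>UNIV. off (A t \<omega>) i j * (v$i - v$j)^2))"
      by (intro intA continuous_intros cont_off)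
    show "AE \<omega> in M. \<alpha> * (\<Sum>i\<in>UNIV. \<Sum>j\<in>UNIV. off (A t \<omega>) i j * (v$i - v$j)^2) \<le> pwE (A t \<omega>)"
      using goodAE by eventually_elim (unfold pwE_def, rule pw, blast)
  qed
  also have "\<dots> = v \<bullet> (mat_expectation M (\<lambda>\<omega>. Rf (A t \<omega>)) *v v)"
    unfolding R by (simp add: intA[OF cpw] intA[OF cg] g0)
  finally have Rb: "\<alpha> * K \<le> v \<bullet> (mat_expectation M (\<lambda>\<omega>. Rf (A t \<omega>)) *v v)" .
  have "amax * K = (amax/\<alpha>) * (\<alpha> * K)" using alpha_pos by simp
  also have "\<dots> \<le> (amax/\<alpha>) * (v \<bullet> (mat_expectation M (\<lambda>\<omega>. Rf (A t \<omega>)) *v v))"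
    using Rb amax_pos alpha_pos by (intro mult_left_mono) auto
  finally show ?thesis using L Lb by linarith
qed

end


lemma var_ident: "(\<Sum>i\<in>UNIV. (y$i - avg y)^2) = y \<bullet> y - real CARD('n) * (avg y)^2"
  for y :: "real^'n"
proof -
  have N: "real CARD('n) \<noteq> 0" by simp
  have s: "(\<Sum>i\<in>UNIV. y$i) = real CARD('n) * avg y" using N by (simp add: avg_def)
  have "(\<Sum>i\<in>UNIV. (y$i - avg y)^2) = (\<Sum>i\<in>UNIV. (y$i)^2) - 2 * avg y * (\<Sum>i\<in>UNIV. y$i) + real CARD('n) * (avg y)^2"
    by (simp add: power2_diff sum.distrib sum_subtractf algebra_simps sum_distrib_left)
  also have "\<dots> = y \<bullet> y - real CARD('n) * (avg y)^2"
    by (simp add: s inner_vec_def power2_eq_square algebra_simps)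
  finally show ?thesis .
qed

lemma cont_avg[continuous_intros]: "continuous_on S f \<Longrightarrow> continuous_on S (\<lambda>x. avg (f x))"
  unfolding avg_def by (intro continuous_intros) auto

lemma cont_Ssum[continuous_intros]: "continuous_on S f \<Longrightarrow> continuous_on S g \<Longrightarrow> continuous_on S (\<lambda>x. Ssum (f x) (g x))"
  unfolding Ssum_def by (intro continuous_intros)

context setting2 begin

lemma intXA':
  fixes h :: "real^'n \<Rightarrow> real^'n^'n \<Rightarrow> real"
  shows "continuous_on UNIV (\<lambda>p. h (fst p) (snd p)) \<Longrightarrow> integrable M (\<lambda>\<omega>. h (x s \<omega>) (A t \<omega>))"
  using intXA[of "\<lambda>p. h (fst p) (snd p)" s t] by simp

lemma step_avg: "avg (x (Suc t) \<omega>) = avg (x t \<omega>) - Ssum (A t \<omega>) (x t \<omega>) / real CARD('n)"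
  by (simp add: avg_def Ssum_def sum_subtractf diff_divide_distrib)

lemma step_norm: "x (Suc t) \<omega> \<bullet> x (Suc t) \<omega> = x t \<omega> \<bullet> x t \<omega> - x t \<omega> \<bullet> (Rf (A t \<omega>) *v x t \<omega>)"
  unfolding Rf_def q_R by (simp add: inner_diff_left inner_diff_right inner_commute)

lemma EZ: "(\<integral>\<omega>. Ssum (A t \<omega>) (x t \<omega>) \<partial>M) = 0"
proof -
  have "(\<integral>\<omega>. Ssum (A t \<omega>) (x t \<omega>) \<partial>M) = (\<Sum>j\<in>UNIV. \<integral>\<omega>. x t \<omega> $ j * colsum (A t \<omega>) j \<partial>M)"
    unfolding S_col
    by (rule Bochner_Integration.integral_sum) (rule intXA', intro continuous_intros cont_snd cont_colsum)
  also have "\<dots> = (\<Sum>j\<in>UNIV. (\<integral>\<omega>. x t \<omega> $ j \<partial>M) * (\<integral>\<omega>. colsum (A t \<omega>) j \<partial>M))"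
  proof (intro sum.cong refl)
    fix j
    have c: "continuous_on UNIV (\<lambda>v::real^'n. v $ j)" by (intro continuous_intros)
    show "(\<integral>\<omega>. x t \<omega> $ j * colsum (A t \<omega>) j \<partial>M) = (\<integral>\<omega>. x t \<omega> $ j \<partial>M) * (\<integral>\<omega>. colsum (A t \<omega>) j \<partial>M)"
      using indep_fg[OF c cont_colsum, of t] by simp
  qed
  finally show ?thesis by (simp add: E_colsum)
qed

lemma EZ2: "(\<integral>\<omega>. (avg (x t \<omega>) - avg x0) * Ssum (A t \<omega>) (x t \<omega>) \<partial>M) = 0"
proof -
  have "(\<integral>\<omega>. (avg (x t \<omega>) - avg x0) * Ssum (A t \<omega>) (x t \<omega>) \<partial>M)
      = (\<integral>\<omega>. (\<Sum>j\<in>UNIV. ((avg (x t \<omega>) - avg x0) * x t \<omega> $ j) * colsum (A t \<omega>) j) \<partial>M)"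
    unfolding S_col by (simp add: sum_distrib_left ac_simps)
  also have "\<dots> = (\<Sum>j\<in>UNIV. \<integral>\<omega>. ((avg (x t \<omega>) - avg x0) * x t \<omega> $ j) * colsum (A t \<omega>) j \<partial>M)"
    by (rule Bochner_Integration.integral_sum) (rule intXA', intro continuous_intros cont_snd cont_colsum)
  also have "\<dots> = (\<Sum>j\<in>UNIV. (\<integral>\<omega>. (avg (x t \<omega>) - avg x0) * x t \<omega> $ j \<partial>M) * (\<integral>\<omega>. colsum (A t \<omega>) j \<partial>M))"
  proof (intro sum.cong refl)
    fix j
    have c: "continuous_on UNIV (\<lambda>v::real^'n. (avg v - avg x0) * v $ j)" by (intro continuous_intros)
    show "(\<integral>\<omega>. ((avg (x t \<omega>) - avg x0) * x t \<omega> $ j) * colsum (A t \<omega>) j \<partial>M) = (\<integral>\<omega>. (avg (x t \<omega>) - avg x0) * x t \<omega> $ j \<partial>M) * (\<integral>\<omega>. colsum (A t \<omega>) j \<partial>M)"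
      using indep_fg[OF c cont_colsum, of t] by simp
  qed
  finally show ?thesis by (simp add: E_colsum)
qed

lemma EZsq: "(\<integral>\<omega>. (Ssum (A t \<omega>) (x t \<omega>))^2 \<partial>M)
   \<le> (amax/\<alpha>) * ((\<integral>\<omega>. x t \<omega> \<bullet> x t \<omega> \<partial>M) - (\<integral>\<omega>. x (Suc t) \<omega> \<bullet> x (Suc t) \<omega> \<partial>M))"
proof -
  let ?EQ = "mat_expectation M (\<lambda>\<omega>. Qf (A t \<omega>))"
  let ?ER = "mat_expectation M (\<lambda>\<omega>. Rf (A t \<omega>))"
  have "(\<integral>\<omega>. (Ssum (A t \<omega>) (x t \<omega>))^2 \<partial>M) = (\<integral>\<omega>. x t \<omega> \<bullet> (Qf (A t \<omega>) *v x t \<omega>) \<partial>M)"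
    by (simp add: Qf_def q_J)
  also have "\<dots> = (\<integral>\<omega>. x t \<omega> \<bullet> (?EQ *v x t \<omega>) \<partial>M)"
    by (rule QEb[OF cont_Qf])
  also have "\<dots> \<le> (\<integral>\<omega>. (amax/\<alpha>) * (x t \<omega> \<bullet> (?ER *v x t \<omega>)) \<partial>M)"
  proof (rule integral_mono)
    show "integrable M (\<lambda>\<omega>. x t \<omega> \<bullet> (?EQ *v x t \<omega>))" by (intro intX continuous_intros)
    show "integrable M (\<lambda>\<omega>. (amax/\<alpha>) * (x t \<omega> \<bullet> (?ER *v x t \<omega>)))" by (intro intX continuous_intros)
    show "x t \<omega> \<bullet> (?EQ *v x t \<omega>) \<le> (amax/\<alpha>) * (x t \<omega> \<bullet> (?ER *v x t \<omega>))" for \<omega> by (rule P1)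
  qed
  also have "\<dots> = (amax/\<alpha>) * (\<integral>\<omega>. x t \<omega> \<bullet> (?ER *v x t \<omega>) \<partial>M)" by simp
  also have "(\<integral>\<omega>. x t \<omega> \<bullet> (?ER *v x t \<omega>) \<partial>M) = (\<integral>\<omega>. x t \<omega> \<bullet> (Rf (A t \<omega>) *v x t \<omega>) \<partial>M)"
    by (rule QEb[OF cont_Rf, symmetric])
  also have "\<dots> = (\<integral>\<omega>. x t \<omega> \<bullet> x t \<omega> \<partial>M) - (\<integral>\<omega>. x (Suc t) \<omega> \<bullet> x (Suc t) \<omega> \<partial>M)"
  proof -
    have i1: "integrable M (\<lambda>\<omega>. x t \<omega> \<bullet> x t \<omega>)" by (intro intX continuous_intros)
    have i2: "integrable M (\<lambda>\<omega>. x t \<omega> \<bullet> (Rf (A t \<omega>) *v x t \<omega>))"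
      by (rule intXA') (unfold Rf_def, intro continuous_intros continuous_on_fst continuous_on_snd continuous_on_id)
    show ?thesis unfolding step_norm using i1 i2 by simp
  qed
  finally show ?thesis .
qed

lemma main_ind:
  "(\<integral>\<omega>. avg (x t \<omega>) \<partial>M) = avg x0 \<and>
   (real CARD('n))^2 * (\<integral>\<omega>. (avg (x t \<omega>) - avg x0)^2 \<partial>M) + (amax/\<alpha>) * (\<integral>\<omega>. x t \<omega> \<bullet> x t \<omega> \<partial>M)
     \<le> (amax/\<alpha>) * (x0 \<bullet> x0)"
proof (induction t)
  case 0 then show ?case by (simp add: prob_space)
next
  case (Suc t)
  define N where "N = real CARD('n)"
  have N0: "N > 0" unfolding N_def by simp
  let ?a = "\<lambda>\<omega>. avg (x t \<omega>) - avg x0"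
  let ?Z = "\<lambda>\<omega>. Ssum (A t \<omega>) (x t \<omega>)"
  have ia: "integrable M (\<lambda>\<omega>. (?a \<omega>)^2)" by (intro intX continuous_intros)
  have iaZ: "integrable M (\<lambda>\<omega>. ?a \<omega> * ?Z \<omega>)" by (rule intXA') (intro continuous_intros continuous_on_fst continuous_on_snd continuous_on_id)
  have iZ2: "integrable M (\<lambda>\<omega>. (?Z \<omega>)^2)" by (rule intXA') (intro continuous_intros continuous_on_fst continuous_on_snd continuous_on_id)
  have iZ: "integrable M ?Z" by (rule intXA') (intro continuous_intros continuous_on_fst continuous_on_snd continuous_on_id)
  have iavg: "integrable M (\<lambda>\<omega>. avg (x t \<omega>))" by (intro intX continuous_intros)
  have sq: "(avg (x (Suc t) \<omega>) - avg x0)^2 = (?a \<omega>)^2 - (2/N) * (?a \<omega> * ?Z \<omega>) + (1/N^2) * (?Z \<omega>)^2" for \<omega>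
    unfolding step_avg N_def[symmetric] using N0 by (simp add: power2_eq_square field_simps)
  have D: "(\<integral>\<omega>. (avg (x (Suc t) \<omega>) - avg x0)^2 \<partial>M)
     = (\<integral>\<omega>. (?a \<omega>)^2 \<partial>M) + (1/N^2) * (\<integral>\<omega>. (?Z \<omega>)^2 \<partial>M)"
    unfolding sq using ia iaZ iZ2 EZ2[of t] by simp
  have Mn: "(\<integral>\<omega>. avg (x (Suc t) \<omega>) \<partial>M) = (\<integral>\<omega>. avg (x t \<omega>) \<partial>M)"
    unfolding step_avg using iZ iavg EZ[of t] by simp
  have "N^2 * (\<integral>\<omega>. (avg (x (Suc t) \<omega>) - avg x0)^2 \<partial>M)
      = N^2 * (\<integral>\<omega>. (?a \<omega>)^2 \<partial>M) + (\<integral>\<omega>. (?Z \<omega>)^2 \<partial>M)"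
    unfolding D using N0 by (simp add: field_simps)
  then have "N^2 * (\<integral>\<omega>. (avg (x (Suc t) \<omega>) - avg x0)^2 \<partial>M) + (amax/\<alpha>) * (\<integral>\<omega>. x (Suc t) \<omega> \<bullet> x (Suc t) \<omega> \<partial>M)
      \<le> N^2 * (\<integral>\<omega>. (?a \<omega>)^2 \<partial>M) + (amax/\<alpha>) * (\<integral>\<omega>. x t \<omega> \<bullet> x t \<omega> \<partial>M)"
    using EZsq[of t] by (simp add: algebra_simps)
  then show ?case using Suc Mn unfolding N_def by simp
qed

lemma final: "(\<integral>\<omega>. (avg (x t \<omega>) - avg x0)^2 \<partial>M)
    \<le> (amax / \<alpha>) / (real CARD('n) + amax / \<alpha>) * Var x0"
proof -
  define N where "N = real CARD('n)"
  define g where "g = amax/\<alpha>"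
  define D where "D = (\<integral>\<omega>. (avg (x t \<omega>) - avg x0)^2 \<partial>M)"
  define m where "m = avg x0"
  have N0: "N > 0" unfolding N_def by simp
  have g0: "g > 0" unfolding g_def using amax_pos alpha_pos by simp
  have mt: "(\<integral>\<omega>. avg (x t \<omega>) \<partial>M) = m"
    and ind: "N^2 * D + g * (\<integral>\<omega>. x t \<omega> \<bullet> x t \<omega> \<partial>M) \<le> g * (x0 \<bullet> x0)"
    using main_ind[of t] unfolding N_def g_def D_def m_def by auto
  have ia: "integrable M (\<lambda>\<omega>. (avg (x t \<omega>) - avg x0)^2)" by (intro intX continuous_intros)
  have iavg: "integrable M (\<lambda>\<omega>. avg (x t \<omega>))" by (intro intX continuous_intros)
  have iavg2: "integrable M (\<lambda>\<omega>. N * (avg (x t \<omega>))^2)" by (intro intX continuous_intros)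
  have inn: "integrable M (\<lambda>\<omega>. x t \<omega> \<bullet> x t \<omega>)" by (intro intX continuous_intros)
  have "(\<integral>\<omega>. N * (avg (x t \<omega>))^2 \<partial>M) \<le> (\<integral>\<omega>. x t \<omega> \<bullet> x t \<omega> \<partial>M)"
  proof (rule integral_mono[OF iavg2 inn])
    fix \<omega>
    have "0 \<le> (\<Sum>i\<in>UNIV. (x t \<omega> $i - avg (x t \<omega>))^2)" by (intro sum_nonneg) auto
    then show "N * (avg (x t \<omega>))^2 \<le> x t \<omega> \<bullet> x t \<omega>" unfolding var_ident N_def by simp
  qed
  moreover have "(\<integral>\<omega>. N * (avg (x t \<omega>))^2 \<partial>M) = N * (D + m^2)"
  proof -
    have e: "N * (avg (x t \<omega>))^2 = N * (avg (x t \<omega>) - avg x0)^2 + 2 * N * m * avg (x t \<omega>) - N * m^2" for \<omega>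
      unfolding m_def by (simp add: power2_eq_square algebra_simps)
    have i1: "integrable M (\<lambda>\<omega>. N * (avg (x t \<omega>) - avg x0)^2)" using ia by simp
    have i2: "integrable M (\<lambda>\<omega>. 2 * N * m * avg (x t \<omega>))" using iavg by simp
    have "(\<integral>\<omega>. N * (avg (x t \<omega>) - avg x0)^2 + 2 * N * m * avg (x t \<omega>) - N * m^2 \<partial>M)
        = (\<integral>\<omega>. N * (avg (x t \<omega>) - avg x0)^2 \<partial>M) + (\<integral>\<omega>. 2 * N * m * avg (x t \<omega>) \<partial>M) - N * m^2"
      using i1 i2 by (simp add: prob_space)
    also have "\<dots> = N * D + 2 * N * m * m - N * m^2"
      using mt by (simp add: D_def)
    finally show ?thesis unfolding e by (simp add: algebra_simps power2_eq_square)
  qed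
  ultimately have En: "N * (D + m^2) \<le> (\<integral>\<omega>. x t \<omega> \<bullet> x t \<omega> \<partial>M)" by linarith
  have V: "N * Var x0 = x0 \<bullet> x0 - N * m^2"
    using var_ident[of x0] N0 unfolding Var_def N_def m_def by simp
  have "N^2 * D + g * (N * (D + m^2)) \<le> g * (x0 \<bullet> x0)"
    using ind En g0 by (smt (verit) mult_left_mono)
  moreover have "g * (x0 \<bullet> x0) = N * (g * Var x0) + g * (N * m^2)"
  proof -
    have X: "x0 \<bullet> x0 = N * Var x0 + N * m^2" using V by linarith
    show ?thesis unfolding X by (simp add: algebra_simps)
  qed
  ultimately have "N * ((N + g) * D) \<le> N * (g * Var x0)"
    by (simp add: algebra_simps power2_eq_square)
  then have "(N + g) * D \<le> g * Var x0" using N0 by simp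
  then have "D \<le> g / (N + g) * Var x0" using N0 g0 by (simp add: field_simps)
  then show ?thesis unfolding D_def g_def N_def .
qed

end

theorem theorem4:
  fixes M :: "'a measure"
    and A :: "nat \<Rightarrow> 'a \<Rightarrow> real^'n^'n"
    and x0 :: "real^'n"
    and amax \<alpha> :: real
  assumes "prob_space M"
    and indep: "prob_space.indep_vars M (\<lambda>_. borel) A UNIV"
    and ident: "\<And>t. distr M borel (A t) = distr M borel (A 0)"
    and nonneg: "\<And>t. AE \<omega> in M. \<forall>i j. A t \<omega> $ i $ j \<ge> 0"
    and rowsum: "\<And>t. AE \<omega> in M. \<forall>i. (\<Sum>l\<in>UNIV. A t \<omega> $ i $ l) = 1"
    and zero_col: "\<And>t. ones_vec v* mat_expectation M (\<lambda>\<omega>. laplacian (A t \<omega>)) = 0"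
    and amax_pos: "amax > 0" and alpha_pos: "\<alpha> > 0"
    and amax_bd: "\<And>t. AE \<omega> in M. \<forall>i j. i \<noteq> j \<longrightarrow> A t \<omega> $ i $ j \<le> amax"
    and alpha_bd: "\<And>t. AE \<omega> in M. \<forall>i. A t \<omega> $ i $ i \<ge> \<alpha>"
    and uncorr: "\<And>t i j k l. i \<noteq> j \<Longrightarrow> k \<noteq> l \<Longrightarrow> (i, j) \<noteq> (k, l) \<Longrightarrow>
        integral\<^sup>L M (\<lambda>\<omega>. A t \<omega> $ i $ j * A t \<omega> $ k $ l)
        = integral\<^sup>L M (\<lambda>\<omega>. A t \<omega> $ i $ j) * integral\<^sup>L M (\<lambda>\<omega>. A t \<omega> $ k $ l)"
  shows "(\<forall>t. mat_le
            (mat_expectation M (\<lambda>\<omega>. transpose (laplacian (A t \<omega>)) ** ones_mat ** laplacian (A t \<omega>)))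
            ((amax / \<alpha>) *\<^sub>R mat_expectation M (\<lambda>\<omega>. laplacian (A t \<omega>) + transpose (laplacian (A t \<omega>))
                 - transpose (laplacian (A t \<omega>)) ** laplacian (A t \<omega>))))
       \<and> (\<forall>t. integral\<^sup>L M (\<lambda>\<omega>. (avg (traj A x0 t \<omega>) - avg x0)^2)
              \<le> (amax / \<alpha>) / (real CARD('n) + amax / \<alpha>) * Var x0)"
  proof -
  interpret prob_space M by fact
  have goodAE: "AE \<omega> in M. \<forall>t. good amax \<alpha> (A t \<omega>)"
    unfolding AE_all_countable
  proof
    fix t
    show "AE \<omega> in M. good amax \<alpha> (A t \<omega>)"
      using nonneg[of t] rowsum[of t] amax_bd[of t] alpha_bd[of t]
      by eventually_elim (auto simp: good_def)
  qed
  interpret S: setting2 M A amax \<alpha> x0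
  proof (unfold_locales)
    show "indep_vars (\<lambda>_. borel) A UNIV" by (rule indep)
    show "AE \<omega> in M. \<forall>t. good amax \<alpha> (A t \<omega>)" by (rule goodAE)
  qed (use zero_col amax_pos alpha_pos uncorr in auto)
  show ?thesis
  proof (intro conjI allI)
    fix t
    show "mat_le
            (mat_expectation M (\<lambda>\<omega>. transpose (laplacian (A t \<omega>)) ** ones_mat ** laplacian (A t \<omega>)))
            ((amax / \<alpha>) *\<^sub>R mat_expectation M (\<lambda>\<omega>. laplacian (A t \<omega>) + transpose (laplacian (A t \<omega>))
                 - transpose (laplacian (A t \<omega>)) ** laplacian (A t \<omega>)))"
      using S.P1[of _ t] unfolding Qf_def Rf_def by (intro mat_le_intro) auto
  next
    fix t
    show "integral\<^sup>L M (\<lambda>\<omega>. (avg (traj A x0 t \<omega>) - avg x0)^2)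
              \<le> (amax / \<alpha>) / (real CARD('n) + amax / \<alpha>) * Var x0"
      by (rule S.final)
  qed
qed

end
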